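(* Let $\mathscr{A}$ be a finite alphabet. Every minimal subshift $\Xi\subseteq\mathscr{A}^{\mathbb{Z}}$ is periodically approximable.
   Context: $\mathscr{A}^{\mathbb{Z}}$ carries the product topology ($\mathscr{A}$ discrete) and the shift $(T\xi)(j)=\xi(j-1)$. A subshift is a non-empty closed subset $\Xi$ with $T(\Xi)\subseteq\Xi$; it is minimal if the orbit $\mathrm{Orb}(\xi)=\{T^n\xi:n\in\mathbb{Z}\}$ is dense in $\Xi$ for every $\xi\in\Xi$. The set $\mathcal{J}$ of subshifts carries the Hausdorff (Vietoris) topology, with basis sets $\{\Xi:\Xi\cap F=\emptyset,\ \Xi\cap O\neq\emptyset\ \forall O\in\mathcal{F}\}$, $F$ closed, $\mathcal{F}$ a finite family of open subsets. A subshift is periodic if it equals $\mathrm{Orb}(\eta)$ for some $\eta$ with $T^n\eta=\eta$ for some $n\geq1$. $\Xi$ is periodically approximable if some sequence of periodic subshifts converges to $\Xi$ in $\mathcal{J}$. *)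

theory Defs
  imports "HOL-Analysis.Analysis"
begin

definition config_top :: "(int \<Rightarrow> 'a) topology" where
  "config_top = product_topology (\<lambda>_::int. discrete_topology (UNIV::'a set)) UNIV"

definition shift :: "(int \<Rightarrow> 'a) \<Rightarrow> (int \<Rightarrow> 'a)" where
  "shift \<xi> = (\<lambda>j. \<xi> (j - 1))"

definition shift_pow :: "int \<Rightarrow> (int \<Rightarrow> 'a) \<Rightarrow> (int \<Rightarrow> 'a)" where
  "shift_pow n \<xi> = (\<lambda>j. \<xi> (j - n))"

definition Orb :: "(int \<Rightarrow> 'a) \<Rightarrow> (int \<Rightarrow> 'a) set" where
  "Orb \<xi> = {shift_pow n \<xi> | n. True}"

definition subshift :: "(int \<Rightarrow> 'a) set \<Rightarrow> bool" where
  "subshift \<Xi> \<longleftrightarrow> \<Xi> \<noteq> {} \<and> closedin config_top \<Xi> \<and> shift ` \<Xi> \<subseteq> \<Xi>"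

definition minimal_subshift :: "(int \<Rightarrow> 'a) set \<Rightarrow> bool" where
  "minimal_subshift \<Xi> \<longleftrightarrow> subshift \<Xi> \<and>
     (\<forall>\<xi>\<in>\<Xi>. Orb \<xi> \<subseteq> \<Xi> \<and> \<Xi> \<subseteq> config_top closure_of (Orb \<xi>))"

definition periodic_subshift :: "(int \<Rightarrow> 'a) set \<Rightarrow> bool" where
  "periodic_subshift \<Xi> \<longleftrightarrow> (\<exists>\<eta> n. n \<ge> 1 \<and> (shift ^^ n) \<eta> = \<eta> \<and> \<Xi> = Orb \<eta>)"

text \<open>The Hausdorff (Vietoris) topology on the set J of subshifts, generated by the
  basis sets {Xi in J. Xi disjoint from F, Xi meets every U in the finite family}.\<close>
definition subshift_top :: "(int \<Rightarrow> 'a) set topology" where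
  "subshift_top = topology_generated_by
     {B. \<exists>F Fam. closedin config_top F \<and> finite Fam \<and> (\<forall>U\<in>Fam. openin config_top U) \<and>
          B = {\<Xi>. subshift \<Xi> \<and> \<Xi> \<inter> F = {} \<and> (\<forall>U\<in>Fam. \<Xi> \<inter> U \<noteq> {})}}"

definition periodically_approximable :: "(int \<Rightarrow> 'a) set \<Rightarrow> bool" where
  "periodically_approximable \<Xi> \<longleftrightarrow>
     (\<exists>S :: nat \<Rightarrow> (int \<Rightarrow> 'a) set. (\<forall>k. periodic_subshift (S k)) \<and>
        limitin subshift_top S \<Xi> sequentially)"

end

theory Submission
  imports Defs
begin

definition agree :: "int \<Rightarrow> (int \<Rightarrow> 'a) \<Rightarrow> (int \<Rightarrow> 'a) \<Rightarrow> bool" where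
  "agree N x y \<longleftrightarrow> (\<forall>i. \<bar>i\<bar> \<le> N \<longrightarrow> x i = y i)"

lemma topspace_config [simp]: "topspace config_top = UNIV"
  by (simp add: config_top_def)

lemma finite_int_bound: "finite (S::int set) \<Longrightarrow> \<exists>N. \<forall>i\<in>S. \<bar>i\<bar> \<le> N"
proof -
  assume "finite S"
  then have "finite (abs ` S)" by simp
  then show ?thesis
    by (metis Max_ge finite_insert image_eqI insertCI)
qed

lemma open_nbhd:
  assumes "openin config_top U" "x \<in> U"
  shows "\<exists>N. \<forall>y. agree N x y \<longrightarrow> y \<in> U"
proof -
  obtain V where V: "finite {i \<in> UNIV. V i \<noteq> topspace (discrete_topology (UNIV::'a set))}"
     "x \<in> Pi\<^sub>E UNIV V" "Pi\<^sub>E UNIV V \<subseteq> U"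
    using assms unfolding config_top_def openin_product_topology_alt by blast
  then have fin: "finite {i. V i \<noteq> UNIV}" by simp
  obtain N where N: "\<forall>i\<in>{i. V i \<noteq> UNIV}. \<bar>i\<bar> \<le> N" using finite_int_bound[OF fin] by blast
  have "y \<in> U" if "agree N x y" for y
  proof -
    have "y \<in> Pi\<^sub>E UNIV V"
    proof (simp add: PiE_iff, intro allI)
      fix i show "y i \<in> V i"
      proof (cases "V i = UNIV")
        case False
        then have "\<bar>i\<bar> \<le> N" using N by auto
        then have "y i = x i" using that unfolding agree_def by auto
        then show ?thesis using V(2) by (auto simp: PiE_iff)
      qed auto
    qed
    then show ?thesis using V(3) by blast
  qed
  then show ?thesis by blast
qed

lemma open_cyl: "openin config_top {y. agree N x y}"
proof -
  define X where "X i = (if \<bar>i\<bar> \<le> N then {x i} else UNIV)" for i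
  have "openin (product_topology (\<lambda>_::int. discrete_topology (UNIV::'a set)) UNIV) (\<Pi>\<^sub>E i\<in>UNIV. X i)"
  proof (rule product_topology_basis)
    show "finite {i. X i \<noteq> topspace (discrete_topology UNIV)}"
      by (rule finite_subset[of _ "{-N..N}"]) (auto simp: X_def split: if_splits)
  qed auto
  moreover have "(\<Pi>\<^sub>E i\<in>UNIV. X i) = {y. agree N x y}"
    by (auto simp: PiE_iff X_def agree_def) (metis singletonD)
  ultimately show ?thesis by (simp add: config_top_def)
qed

lemma compact_config: "compact_space (config_top :: (int \<Rightarrow> 'a::finite) topology)"
  unfolding config_top_def
  by (simp add: compact_space_product_topology compact_space_discrete_topology)

lemma hausdorff_config: "Hausdorff_space config_top"
  unfolding config_top_def
  by (simp add: Hausdorff_space_product_topology)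

lemma uniform_N:
  assumes K: "compactin config_top K"
    and loc: "\<forall>x\<in>K. \<exists>N. \<forall>y. agree N x y \<longrightarrow> P N y"
    and mono: "\<And>N M y. N \<le> M \<Longrightarrow> P N y \<Longrightarrow> P M y"
  shows "\<exists>N. \<forall>y\<in>K. P N y"
proof -
  obtain Nx where Nx: "\<forall>x\<in>K. \<forall>y. agree (Nx x) x y \<longrightarrow> P (Nx x) y"
    using loc by metis
  let ?C = "\<lambda>x. {y. agree (Nx x) x y}"
  have "(\<forall>U \<in> ?C ` K. openin config_top U) \<and> K \<subseteq> \<Union>(?C ` K)"
    using open_cyl by (auto simp: agree_def)
  then obtain \<F> where F: "finite \<F>" "\<F> \<subseteq> ?C ` K" "K \<subseteq> \<Union>\<F>"
    using K unfolding compactin_def by meson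
  then obtain K' where K': "K' \<subseteq> K" "finite K'" "\<F> = ?C ` K'"
    by (meson finite_subset_image)
  define N where "N = Max (insert 0 (Nx ` K'))"
  have "P N y" if yK: "y \<in> K" for y
  proof -
    obtain x where x: "x \<in> K'" "agree (Nx x) x y" using F(3) K'(3) yK by blast
    then have "P (Nx x) y" using Nx K'(1) by blast
    moreover have "Nx x \<le> N" unfolding N_def using K'(2) x(1) by auto
    ultimately show ?thesis using mono by blast
  qed
  then show ?thesis by blast
qed


lemma shift_pow_add: "shift_pow a (shift_pow b x) = shift_pow (a + b) x"
  by (simp add: shift_pow_def algebra_simps)

lemma shift_pow_0 [simp]: "shift_pow 0 x = x"
  by (simp add: shift_pow_def)

lemma shift_eq: "shift x = shift_pow 1 x"
  by (simp add: shift_def shift_pow_def)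

lemma funpow_shift: "(shift ^^ n) x = shift_pow (int n) x"
  by (induction n) (simp_all add: shift_eq shift_pow_add add.commute)

lemma shift_pow_in:
  assumes "minimal_subshift \<Xi>" "x \<in> \<Xi>" shows "shift_pow n x \<in> \<Xi>"
  using assms unfolding minimal_subshift_def Orb_def by blast

lemma compact_Xi:
  assumes "minimal_subshift (\<Xi> :: (int \<Rightarrow> 'a::finite) set)" shows "compactin config_top \<Xi>"
  using assms compact_config closedin_compact_space
  unfolding minimal_subshift_def subshift_def by blast

lemma agree_mono: "agree M x y \<Longrightarrow> N \<le> M \<Longrightarrow> agree N x y"
  unfolding agree_def by auto

lemma stepA:
  assumes m: "minimal_subshift (\<Xi> :: (int \<Rightarrow> 'a::finite) set)" and z: "\<zeta> \<in> \<Xi>"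
  shows "\<exists>R. \<forall>\<eta>\<in>\<Xi>. \<exists>q. \<bar>q\<bar> \<le> R \<and> (\<forall>i. \<bar>i\<bar> \<le> N \<longrightarrow> \<eta> (q + i) = \<zeta> i)"
proof (rule uniform_N[OF compact_Xi[OF m]])
  show "\<forall>x\<in>\<Xi>. \<exists>R. \<forall>y. agree R x y \<longrightarrow> (\<exists>q. \<bar>q\<bar> \<le> R \<and> (\<forall>i. \<bar>i\<bar> \<le> N \<longrightarrow> y (q + i) = \<zeta> i))"
  proof
    fix x assume x: "x \<in> \<Xi>"
    then have "\<zeta> \<in> config_top closure_of (Orb x)" using m z unfolding minimal_subshift_def by blast
    moreover have "\<zeta> \<in> {y. agree N \<zeta> y}" by (simp add: agree_def)
    ultimately obtain y where y: "y \<in> Orb x" "agree N \<zeta> y"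
      using open_cyl[of N \<zeta>] unfolding in_closure_of by blast
    then obtain n where n: "y = shift_pow n x" unfolding Orb_def by blast
    have eq: "x (i - n) = \<zeta> i" if "\<bar>i\<bar> \<le> N" for i
      using y(2) that unfolding n agree_def shift_pow_def by auto
    show "\<exists>R. \<forall>y. agree R x y \<longrightarrow> (\<exists>q. \<bar>q\<bar> \<le> R \<and> (\<forall>i. \<bar>i\<bar> \<le> N \<longrightarrow> y (q + i) = \<zeta> i))"
    proof (rule exI[of _ "\<bar>n\<bar> + \<bar>N\<bar>"], intro allI impI)
      fix w assume w: "agree (\<bar>n\<bar> + \<bar>N\<bar>) x w"
      show "\<exists>q. \<bar>q\<bar> \<le> \<bar>n\<bar> + \<bar>N\<bar> \<and> (\<forall>i. \<bar>i\<bar> \<le> N \<longrightarrow> w (q + i) = \<zeta> i)"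
      proof (rule exI[of _ "-n"], intro conjI allI impI)
        fix i assume i: "\<bar>i\<bar> \<le> N"
        have "w (- n + i) = x (- n + i)" using w i unfolding agree_def by auto
        then show "w (- n + i) = \<zeta> i" using eq[OF i] by simp
      qed auto
    qed
  qed
qed (meson order_trans)

lemma stepB:
  assumes m: "minimal_subshift (\<Xi> :: (int \<Rightarrow> 'a::finite) set)"
  shows "\<exists>R. \<forall>\<zeta>\<in>\<Xi>. \<forall>\<eta>\<in>\<Xi>. \<exists>q. \<bar>q\<bar> \<le> R \<and> (\<forall>i. \<bar>i\<bar> \<le> N \<longrightarrow> \<eta> (q + i) = \<zeta> i)"
proof (rule uniform_N[OF compact_Xi[OF m]])
  show "\<forall>x\<in>\<Xi>. \<exists>R. \<forall>y. agree R x y \<longrightarrow> (\<forall>\<eta>\<in>\<Xi>. \<exists>q. \<bar>q\<bar> \<le> R \<and> (\<forall>i. \<bar>i\<bar> \<le> N \<longrightarrow> \<eta> (q + i) = y i))"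
  proof
    fix x assume x: "x \<in> \<Xi>"
    obtain R where R: "\<forall>\<eta>\<in>\<Xi>. \<exists>q. \<bar>q\<bar> \<le> R \<and> (\<forall>i. \<bar>i\<bar> \<le> N \<longrightarrow> \<eta> (q + i) = x i)"
      using stepA[OF m x] by blast
    show "\<exists>R. \<forall>y. agree R x y \<longrightarrow> (\<forall>\<eta>\<in>\<Xi>. \<exists>q. \<bar>q\<bar> \<le> R \<and> (\<forall>i. \<bar>i\<bar> \<le> N \<longrightarrow> \<eta> (q + i) = y i))"
    proof (rule exI[of _ "max R N"], intro allI impI ballI)
      fix y \<eta> assume y: "agree (max R N) x y" and e: "\<eta> \<in> \<Xi>"
      obtain q where q: "\<bar>q\<bar> \<le> R" "\<forall>i. \<bar>i\<bar> \<le> N \<longrightarrow> \<eta> (q + i) = x i" using R e by blast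
      show "\<exists>q. \<bar>q\<bar> \<le> max R N \<and> (\<forall>i. \<bar>i\<bar> \<le> N \<longrightarrow> \<eta> (q + i) = y i)"
        using q y unfolding agree_def by (intro exI[of _ q]) auto
    qed
  qed
qed (meson order_trans)


lemma mod_wrap:
  fixes m t p :: int
  assumes "0 \<le> m" "m < p" "0 \<le> t" "t < p"
  shows "(m + t) mod p = (if m + t < p then m + t else m + t - p)"
proof (cases "m + t < p")
  case True then show ?thesis using assms by simp
next
  case False
  have "(m + t) mod p = (m + t - p) mod p" by (metis mod_add_self2 diff_add_cancel)
  also have "\<dots> = m + t - p" using assms False by (intro mod_pos_pos_trivial) auto
  finally show ?thesis using False by simp
qed

lemma approx_point:
  assumes m: "minimal_subshift (\<Xi> :: (int \<Rightarrow> 'a::finite) set)" and N: "0 \<le> N"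
  shows "\<exists>e p. p \<ge> 1 \<and> (\<forall>n. shift_pow n e = shift_pow (n mod p) e) \<and> shift_pow p e = e \<and>
     (\<forall>j. \<exists>z\<in>\<Xi>. \<forall>i. \<bar>i\<bar> \<le> N \<longrightarrow> e (j + i) = z i) \<and>
     (\<forall>x\<in>\<Xi>. \<exists>c. \<forall>i. \<bar>i\<bar> \<le> N \<longrightarrow> e (c + i) = x i)"
proof -
  obtain R0 where R0: "\<forall>\<zeta>\<in>\<Xi>. \<forall>\<eta>\<in>\<Xi>. \<exists>q. \<bar>q\<bar> \<le> R0 \<and> (\<forall>i. \<bar>i\<bar> \<le> N \<longrightarrow> \<eta> (q + i) = \<zeta> i)"
    using stepB[OF m] by blast
  define R where "R = max R0 0"
  have R: "R \<ge> 0" "R0 \<le> R" by (auto simp: R_def)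
  obtain \<xi> where xi: "\<xi> \<in> \<Xi>" using m unfolding minimal_subshift_def subshift_def by blast
  define D where "D = 3*R + 3*N + 1"
  obtain q where q: "\<bar>q\<bar> \<le> R0" "\<forall>i. \<bar>i\<bar> \<le> N \<longrightarrow> (shift_pow (-D) \<xi>) (q + i) = (shift_pow R \<xi>) i"
    using R0 shift_pow_in[OF m xi] by blast
  define p where "p = q + D + R"
  define a where "a = -R-N"
  have p: "p \<ge> 2*R + 2*N + 1" using q(1) R N unfolding p_def D_def by linarith
  have per: "\<xi> (x + p) = \<xi> x" if "a \<le> x" "x \<le> a + 2*N" for x
  proof -
    have "\<bar>x + R\<bar> \<le> N" using that N R unfolding a_def by linarith
    then have "\<xi> (q + (x + R) + D) = \<xi> (x + R - R)" using q(2) unfolding shift_pow_def by auto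
    then show ?thesis unfolding p_def by (simp add: algebra_simps)
  qed
  define e where "e j = \<xi> (a + (j - a) mod p)" for j
  have A: "\<forall>n. shift_pow n e = shift_pow (n mod p) e"
  proof
    fix n show "shift_pow n e = shift_pow (n mod p) e"
    proof
      fix j
      have "(j - a - n mod p) mod p = (j - a - n) mod p" by (rule mod_diff_right_eq)
      then show "shift_pow n e j = shift_pow (n mod p) e j"
        unfolding shift_pow_def e_def by (simp add: algebra_simps)
    qed
  qed
  have B: "shift_pow p e = e" using A[rule_format, of p] by simp
  have C: "\<forall>j. \<exists>z\<in>\<Xi>. \<forall>i. \<bar>i\<bar> \<le> N \<longrightarrow> e (j + i) = z i"
  proof
    fix j
    define mm where "mm = (j - N - a) mod p"
    have mm: "0 \<le> mm" "mm < p" using p R N unfolding mm_def by auto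
    show "\<exists>z\<in>\<Xi>. \<forall>i. \<bar>i\<bar> \<le> N \<longrightarrow> e (j + i) = z i"
    proof (intro bexI[of _ "shift_pow (-(a+mm+N)) \<xi>"] allI impI)
      show "shift_pow (-(a+mm+N)) \<xi> \<in> \<Xi>" by (rule shift_pow_in[OF m xi])
      fix i assume i: "\<bar>i\<bar> \<le> N"
      define t where "t = i + N"
      have t: "0 \<le> t" "t < p" "t \<le> 2*N" using i p R unfolding t_def by auto
      have "((j - N - a) mod p + t) mod p = (j - N - a + t) mod p" by (rule mod_add_left_eq)
      then have "(j + i - a) mod p = ((j - N - a) mod p + t) mod p"
        unfolding t_def by (simp add: algebra_simps)
      also have "\<dots> = (if mm + t < p then mm + t else mm + t - p)"
        unfolding mm_def[symmetric] using mod_wrap[OF mm t(1,2)] .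
      finally have md: "(j + i - a) mod p = (if mm + t < p then mm + t else mm + t - p)" .
      have "e (j + i) = \<xi> (a + mm + t)"
      proof (cases "mm + t < p")
        case True then show ?thesis unfolding e_def using md by (simp add: algebra_simps)
      next
        case False
        have "\<xi> (a + mm + t - p + p) = \<xi> (a + mm + t - p)"
          using mm t False by (intro per) auto
        moreover have "(j + i - a) mod p = mm + t - p" using md False by simp
        then have "e (j + i) = \<xi> (a + (mm + t - p))" unfolding e_def by simp
        ultimately show ?thesis by (simp add: algebra_simps)
      qed
      then show "e (j + i) = shift_pow (-(a+mm+N)) \<xi> i"
        unfolding shift_pow_def t_def by (simp add: algebra_simps)
    qed
  qed
  have D: "\<forall>x\<in>\<Xi>. \<exists>c. \<forall>i. \<bar>i\<bar> \<le> N \<longrightarrow> e (c + i) = x i"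
  proof
    fix x assume x: "x \<in> \<Xi>"
    obtain c where c: "\<bar>c\<bar> \<le> R0" "\<forall>i. \<bar>i\<bar> \<le> N \<longrightarrow> \<xi> (c + i) = x i" using R0 x xi by blast
    show "\<exists>c. \<forall>i. \<bar>i\<bar> \<le> N \<longrightarrow> e (c + i) = x i"
    proof (intro exI[of _ c] allI impI)
      fix i assume i: "\<bar>i\<bar> \<le> N"
      have "(c + i - a) mod p = c + i - a"
        using c(1) R i p unfolding a_def by (intro mod_pos_pos_trivial) auto
      then show "e (c + i) = x i" using c(2) i unfolding e_def by simp
    qed
  qed
  show ?thesis using A B C D p R N by (intro exI[of _ e] exI[of _ p]) auto
qed


lemma gen_eventually:
  assumes "generate_topology_on \<S> U" "l \<in> U"
    and H: "\<forall>B\<in>\<S>. l \<in> B \<longrightarrow> eventually (\<lambda>k. f k \<in> B) F"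
  shows "eventually (\<lambda>k. f k \<in> U) F"
  using assms(1,2)
proof (induction rule: generate_topology_on.induct)
  case Empty
  then show ?case by simp
next
  case (Int a b)
  then have "eventually (\<lambda>k. f k \<in> a) F" "eventually (\<lambda>k. f k \<in> b) F" by simp_all
  then have "eventually (\<lambda>k. f k \<in> a \<and> f k \<in> b) F" by (rule eventually_conj)
  then show ?case by simp
next
  case (UN K)
  then obtain k where k: "k \<in> K" "l \<in> k" by blast
  then have "eventually (\<lambda>x. f x \<in> k) F" using UN.IH by blast
  then show ?case by (rule eventually_mono) (use k in blast)
next
  case (Basis s)
  then show ?case using H by blast
qed

lemma subshift_Orb:
  assumes "p \<ge> 1" "\<forall>n. shift_pow n e = shift_pow (n mod p) e"
  shows "subshift (Orb (e :: int \<Rightarrow> 'a::finite))"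
proof -
  have "Orb e \<subseteq> (\<lambda>n. shift_pow n e) ` {0..<p}"
  proof
    fix y assume "y \<in> Orb e"
    then obtain n where "y = shift_pow n e" unfolding Orb_def by blast
    then have "y = shift_pow (n mod p) e" using assms by simp
    moreover have "n mod p \<in> {0..<p}" using assms by auto
    ultimately show "y \<in> (\<lambda>n. shift_pow n e) ` {0..<p}" by blast
  qed
  then have fin: "finite (Orb e)" by (rule finite_subset) simp
  have "closedin config_top (Orb e)"
    using closedin_Hausdorff_finite[OF hausdorff_config _ fin] by simp
  moreover have "Orb e \<noteq> {}" unfolding Orb_def by auto
  moreover have "shift ` Orb e \<subseteq> Orb e"
    unfolding Orb_def by (auto simp: shift_eq shift_pow_add)
  ultimately show ?thesis unfolding subshift_def by blast
qed

theorem corollary1: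
  fixes \<Xi> :: "(int \<Rightarrow> 'a::finite) set"
  assumes "minimal_subshift \<Xi>"
  shows "periodically_approximable \<Xi>"
proof -
  note m = assms
  define Q where "Q k e p \<longleftrightarrow> p \<ge> 1 \<and> (\<forall>n. shift_pow n e = shift_pow (n mod p) e) \<and> shift_pow p e = e \<and>
     (\<forall>j. \<exists>z\<in>\<Xi>. \<forall>i. \<bar>i\<bar> \<le> int k \<longrightarrow> e (j + i) = z i) \<and>
     (\<forall>x\<in>\<Xi>. \<exists>c. \<forall>i. \<bar>i\<bar> \<le> int k \<longrightarrow> e (c + i) = x i)" for k :: nat and e p
  have "\<exists>e p. Q k e p" for k using approx_point[OF m, of "int k"] unfolding Q_def by simp
  then have "\<forall>k. \<exists>e p. Q k e p" by blast
  from choice[OF this] obtain e where e: "\<forall>k. \<exists>p. Q k (e k) p" by (elim exE)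
  from choice[OF e] obtain P where QP: "\<forall>k. Q k (e k) (P k)" by (elim exE)
  have EP: "\<And>k. P k \<ge> 1" "\<And>k n. shift_pow n (e k) = shift_pow (n mod P k) (e k)"
    "\<And>k. shift_pow (P k) (e k) = e k"
    "\<And>k j. \<exists>z\<in>\<Xi>. \<forall>i. \<bar>i\<bar> \<le> int k \<longrightarrow> e k (j + i) = z i"
    "\<And>k x. x \<in> \<Xi> \<Longrightarrow> \<exists>c. \<forall>i. \<bar>i\<bar> \<le> int k \<longrightarrow> e k (c + i) = x i"
    using QP unfolding Q_def by blast+
  define S where "S k = Orb (e k)" for k
  have sub: "subshift (S k)" for k unfolding S_def using subshift_Orb EP(1,2) by blast
  have per: "periodic_subshift (S k)" for k
    unfolding periodic_subshift_def S_def
  proof (intro exI conjI)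
    show "(shift ^^ nat (P k)) (e k) = e k" using EP(1,3)[of k] by (simp add: funpow_shift)
  qed (use EP(1)[of k] in auto)
  have subX: "subshift \<Xi>" using m unfolding minimal_subshift_def by blast
  define \<S> :: "(int \<Rightarrow> 'a) set set set" where "\<S> = {B. \<exists>F Fam. closedin config_top F \<and> finite Fam \<and> (\<forall>U\<in>Fam. openin config_top U) \<and>
          B = {\<Xi>. subshift \<Xi> \<and> \<Xi> \<inter> F = {} \<and> (\<forall>U\<in>Fam. \<Xi> \<inter> U \<noteq> {})}}"
  have top: "subshift_top = topology_generated_by \<S>" unfolding subshift_top_def \<S>_def ..
  have basic: "eventually (\<lambda>k. S k \<in> B) sequentially" if B: "B \<in> \<S>" "\<Xi> \<in> B" for B
  proof -
    obtain F Fam where FF: "closedin config_top F" "finite Fam" "\<forall>U\<in>Fam. openin config_top U"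
      "B = {\<Xi>. subshift \<Xi> \<and> \<Xi> \<inter> F = {} \<and> (\<forall>U\<in>Fam. \<Xi> \<inter> U \<noteq> {})}"
      using B(1) unfolding \<S>_def by blast
    have XF: "\<Xi> \<inter> F = {}" and XU: "\<forall>U\<in>Fam. \<Xi> \<inter> U \<noteq> {}" using B(2) FF(4) by auto
    have "\<exists>N. \<forall>y\<in>F. \<not> (\<exists>z\<in>\<Xi>. agree N z y)"
    proof (rule uniform_N)
      show "compactin config_top F" using FF(1) compact_config closedin_compact_space by blast
      show "\<forall>x\<in>F. \<exists>N. \<forall>y. agree N x y \<longrightarrow> \<not> (\<exists>z\<in>\<Xi>. agree N z y)"
      proof
        fix x assume x: "x \<in> F"
        have "openin config_top (topspace config_top - \<Xi>)"
          using subX unfolding subshift_def closedin_def by blast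
        moreover have "x \<in> topspace config_top - \<Xi>" using x XF by auto
        ultimately obtain N where N: "\<forall>y. agree N x y \<longrightarrow> y \<notin> \<Xi>"
          using open_nbhd by (metis Diff_iff)
        show "\<exists>N. \<forall>y. agree N x y \<longrightarrow> \<not> (\<exists>z\<in>\<Xi>. agree N z y)"
        proof (intro exI[of _ N] allI impI notI)
          fix y assume "agree N x y" "\<exists>z\<in>\<Xi>. agree N z y"
          then obtain z where "z \<in> \<Xi>" "agree N x z" unfolding agree_def by auto
          then show False using N by blast
        qed
      qed
    qed (meson agree_mono)
    then obtain NF where NF: "\<forall>y\<in>F. \<not> (\<exists>z\<in>\<Xi>. agree NF z y)" by blast
    have ev1: "eventually (\<lambda>k. S k \<inter> F = {}) sequentially"
    proof (rule eventually_sequentiallyI[of "nat NF"])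
      fix k assume k: "nat NF \<le> k"
      show "S k \<inter> F = {}"
      proof (rule ccontr)
        assume "S k \<inter> F \<noteq> {}"
        then obtain y where y: "y \<in> S k" "y \<in> F" by blast
        then obtain n where n: "y = shift_pow n (e k)" unfolding S_def Orb_def by blast
        obtain z where z: "z \<in> \<Xi>" "\<forall>i. \<bar>i\<bar> \<le> int k \<longrightarrow> e k (-n + i) = z i" using EP(4) by blast
        have "agree NF z y" unfolding agree_def n shift_pow_def using z(2) k by auto
        then show False using NF y(2) z(1) by blast
      qed
    qed
    have ev2: "eventually (\<lambda>k. \<forall>U\<in>Fam. S k \<inter> U \<noteq> {}) sequentially"
    proof (rule eventually_ball_finite[OF FF(2)], rule ballI)
      fix U assume U: "U \<in> Fam"
      then obtain x where x: "x \<in> \<Xi>" "x \<in> U" using XU by blast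
      obtain NU where NU: "\<forall>y. agree NU x y \<longrightarrow> y \<in> U" using open_nbhd FF(3) U x(2) by blast
      show "eventually (\<lambda>k. S k \<inter> U \<noteq> {}) sequentially"
      proof (rule eventually_sequentiallyI[of "nat NU"])
        fix k assume k: "nat NU \<le> k"
        obtain c where c: "\<forall>i. \<bar>i\<bar> \<le> int k \<longrightarrow> e k (c + i) = x i" using EP(5)[OF x(1)] by blast
        have "agree NU x (shift_pow (-c) (e k))" unfolding agree_def shift_pow_def using c k
          by (auto simp: add.commute)
        then have "shift_pow (-c) (e k) \<in> U" using NU by blast
        moreover have "shift_pow (-c) (e k) \<in> S k" unfolding S_def Orb_def by blast
        ultimately show "S k \<inter> U \<noteq> {}" by blast
      qed
    qed
    have "eventually (\<lambda>k. S k \<inter> F = {} \<and> (\<forall>U\<in>Fam. S k \<inter> U \<noteq> {})) sequentially"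
      using ev1 ev2 by (rule eventually_conj)
    then show ?thesis by (rule eventually_mono) (simp add: FF(4) sub)
  qed
  have XS: "\<Xi> \<in> \<Union>\<S>"
  proof
    show "\<Xi> \<in> {\<Xi>. subshift \<Xi> \<and> \<Xi> \<inter> {} = {} \<and> (\<forall>U\<in>{}. \<Xi> \<inter> U \<noteq> {})}" using subX by simp
    show "{\<Xi>. subshift \<Xi> \<and> \<Xi> \<inter> {} = {} \<and> (\<forall>U\<in>{}. \<Xi> \<inter> U \<noteq> {})} \<in> \<S>"
      unfolding \<S>_def by (intro CollectI exI[of _ "{}"]) auto
  qed
  have "limitin subshift_top S \<Xi> sequentially"
  proof (unfold limitin_def, intro conjI allI impI)
    show "\<Xi> \<in> topspace subshift_top" using XS unfolding top by simp
    fix U assume U: "openin subshift_top U \<and> \<Xi> \<in> U"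
    then have g: "generate_topology_on \<S> U" unfolding top openin_topology_generated_by_iff by simp
    show "eventually (\<lambda>k. S k \<in> U) sequentially"
    proof (rule gen_eventually[OF g])
      show "\<Xi> \<in> U" using U by simp
      show "\<forall>B\<in>\<S>. \<Xi> \<in> B \<longrightarrow> eventually (\<lambda>k. S k \<in> B) sequentially"
        using basic by simp
    qed
  qed
  then show ?thesis unfolding periodically_approximable_def using per by blast
qed

end
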